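(* For real parameters $p,r$, the Stolarsky mean $E_{p,r}$ is stable if and only if $(p-2r)(r-2p)(p+r)=0$; i.e. the only stable Stolarsky means are the power means $E_{2r,r}=B_r$, $E_{p,2p}=B_p$, $E_{p,-p}=B_0$.
   Context: For $s,t>0$, $s\neq t$: $E_{p,r}(s,t)=\big[\frac{r(t^p-s^p)}{p(t^r-s^r)}\big]^{1/(p-r)}$ for $p\ne r$, $p,r\ne0$; $E_{r,r}(s,t)=e^{-1/r}\big(t^{t^r}/s^{s^r}\big)^{1/(t^r-s^r)}$ for $r\ne0$; $E_{0,r}(s,t)=\big[\frac{t^r-s^r}{r(\log t-\log s)}\big]^{1/r}$ for $r\ne0$ (and symmetrically $E_{p,0}=E_{0,p}$); $E_{0,0}(s,t)=\sqrt{st}$; $E_{p,r}(s,s)=s$. Power mean: $B_r(s,t)=\big(\frac{s^r+t^r}2\big)^{1/r}$ for $r\ne0$, $B_0(s,t)=\sqrt{st}$. A mean $M$ is stable if $M(s,t)=M\big(M(s,M(s,t)),M(M(s,t),t)\big)$ for all $s,t>0$. *)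

theory Defs
  imports Complex_Main
begin

definition stolarsky :: "real \<Rightarrow> real \<Rightarrow> real \<Rightarrow> real \<Rightarrow> real" where
  "stolarsky p r s t =
     (if s = t then s
      else if p = 0 \<and> r = 0 then sqrt (s * t)
      else if p = r then
        exp (- 1 / r) * ((t powr (t powr r)) / (s powr (s powr r))) powr (1 / (t powr r - s powr r))
      else if p = 0 then ((t powr r - s powr r) / (r * (ln t - ln s))) powr (1 / r)
      else if r = 0 then ((t powr p - s powr p) / (p * (ln t - ln s))) powr (1 / p)
      else ((r * (t powr p - s powr p)) / (p * (t powr r - s powr r))) powr (1 / (p - r)))"

definition power_mean :: "real \<Rightarrow> real \<Rightarrow> real \<Rightarrow> real" where
  "power_mean r s t = (if r = 0 then sqrt (s * t) else ((s powr r + t powr r) / 2) powr (1 / r))"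

definition stable_mean :: "(real \<Rightarrow> real \<Rightarrow> real) \<Rightarrow> bool" where
  "stable_mean M \<longleftrightarrow>
     (\<forall>s t. s > 0 \<longrightarrow> t > 0 \<longrightarrow> M s t = M (M s (M s t)) (M (M s t) t))"

end

theory Submission imports Defs "HOL-Real_Asymp.Real_Asymp" begin

lemma alg1:
  fixes y c h0 h1 h2 h3 \<kappa> \<alpha> \<beta> \<gamma> \<delta> :: real
  assumes "\<alpha> = (1+y*\<kappa>)/2" "\<beta> = (1-y*\<kappa>)/2" "\<gamma> = (1+y^2*\<delta>)/2"
  shows "(c*y^2 + y^4*h0)/2 + ((c*(y*\<alpha>)^2 + (y*\<alpha>)^4*h1) + (c*(y*\<beta>)^2 + (y*\<beta>)^4*h2))/2
     + (c*(y*\<gamma>)^2 + (y*\<gamma>)^4*h3) - (c*y^2 + y^4*h0)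
   = y^4 * (c*(\<kappa>^2 + 2*\<delta> + y^2*\<delta>^2)/4 - h0/2 + (\<alpha>^4*h1 + \<beta>^4*h2)/2 + \<gamma>^4*h3)"
proof -
  have 1: "\<alpha>^2 + \<beta>^2 = (1+y^2*\<kappa>^2)/2" unfolding assms by (simp add: power2_eq_square field_simps)
  have 2: "\<gamma>^2 = (1+2*y^2*\<delta>+y^4*\<delta>^2)/4" unfolding assms by (simp add: power2_eq_square field_simps eval_nat_numeral)
  have "c*(y*\<alpha>)^2 + c*(y*\<beta>)^2 = c*y^2*(\<alpha>^2 + \<beta>^2)" by (simp add: power_mult_distrib algebra_simps)
  moreover have "c*(y*\<gamma>)^2 = c*y^2*\<gamma>^2" by (simp add: power_mult_distrib)
  have 3: "(c*y^2 + y^4*h0)/2 + ((c*(y*\<alpha>)^2 + (y*\<alpha>)^4*h1) + (c*(y*\<beta>)^2 + (y*\<beta>)^4*h2))/2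
     + (c*(y*\<gamma>)^2 + (y*\<gamma>)^4*h3) - (c*y^2 + y^4*h0) =
     - (c*y^2 + y^4*h0)/2 + c*y^2*(\<alpha>^2 + \<beta>^2)/2 + c*y^2*\<gamma>^2 + y^4*((\<alpha>^4*h1 + \<beta>^4*h2)/2 + \<gamma>^4*h3)"
    by (simp add: field_simps power_mult_distrib)
  show ?thesis unfolding 3 1 2 by (simp add: field_simps power_mult_distrib)
qed

lemma alg2:
  fixes y c h1 h2 \<kappa> \<alpha> \<beta> \<gamma> \<delta> :: real
  assumes "\<alpha> = (1+y*\<kappa>)/2" "\<beta> = (1-y*\<kappa>)/2" "\<delta> = - c * \<kappa> + y * (\<beta>^4 * h2 - \<alpha>^4 * h1)"
     "\<gamma> = (1+y^2*\<delta>)/2"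
  shows "(y + (c*(y*\<beta>)^2 + (y*\<beta>)^4*h2) - (c*(y*\<alpha>)^2 + (y*\<alpha>)^4*h1))/2 = y * \<gamma>"
proof -
  have 1: "\<beta>^2 - \<alpha>^2 = - y*\<kappa>" unfolding assms(1,2) by (simp add: power2_eq_square field_simps)
  have "c*(y*\<beta>)^2 - c*(y*\<alpha>)^2 = c*y^2*(\<beta>^2 - \<alpha>^2)" by (simp add: power_mult_distrib algebra_simps)
  have 3: "(y + (c*(y*\<beta>)^2 + (y*\<beta>)^4*h2) - (c*(y*\<alpha>)^2 + (y*\<alpha>)^4*h1))/2
     = (y + c*y^2*(\<beta>^2 - \<alpha>^2) + y^4*(\<beta>^4*h2 - \<alpha>^4*h1))/2" by (simp add: field_simps power_mult_distrib)
  show ?thesis unfolding 3 1 assms(4,3) by (simp add: field_simps power_mult_distrib eval_nat_numeral)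
qed

lemma stab_abstract:
  fixes G :: "real \<Rightarrow> real" and c d :: real
  assumes eq: "\<And>y. G y / 2 + (G ((y + G y)/2) + G ((y - G y)/2))/2
      + G ((y + G ((y - G y)/2) - G ((y + G y)/2))/2) = G y"
  and lim: "((\<lambda>y. (G y - c*y^2)/y^4) \<longlongrightarrow> d) (at 0)"
  shows "3*d + 2*c^3 = 0"
proof -
  define hh where "hh = (\<lambda>y. (G y - c*y^2)/y^4)"
  define \<kappa> where "\<kappa> = (\<lambda>y. c + y^2 * hh y)"
  define \<alpha> where "\<alpha> = (\<lambda>y. (1 + y * \<kappa> y)/2)"
  define \<beta> where "\<beta> = (\<lambda>y. (1 - y * \<kappa> y)/2)"
  define \<delta> where "\<delta> = (\<lambda>y. - c * \<kappa> y + y * (\<beta> y^4 * hh (y * \<beta> y) - \<alpha> y^4 * hh (y * \<alpha> y)))"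
  define \<gamma> where "\<gamma> = (\<lambda>y. (1 + y^2 * \<delta> y)/2)"
  define Q where "Q = (\<lambda>y. c*(\<kappa> y^2 + 2*\<delta> y + y^2*\<delta> y^2)/4 - hh y/2
      + (\<alpha> y^4 * hh (y*\<alpha> y) + \<beta> y^4 * hh (y * \<beta> y))/2 + \<gamma> y^4 * hh (y * \<gamma> y))"
  have Gz: "G z = c*z^2 + z^4 * hh z" if "z \<noteq> 0" for z
    using that by (simp add: hh_def field_simps)
  have key: "Q y = 0" if y0: "y \<noteq> 0" and a0: "\<alpha> y \<noteq> 0" and b0: "\<beta> y \<noteq> 0" and g0: "\<gamma> y \<noteq> 0" for y
  proof -
    have ya: "y * \<alpha> y \<noteq> 0" and yb: "y * \<beta> y \<noteq> 0" and yg: "y * \<gamma> y \<noteq> 0"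
      using y0 a0 b0 g0 by auto
    have u1: "(y + G y)/2 = y * \<alpha> y"
      using y0 by (simp add: Gz \<alpha>_def \<kappa>_def field_simps eval_nat_numeral)
    have u2: "(y - G y)/2 = y * \<beta> y"
      using y0 by (simp add: Gz \<beta>_def \<kappa>_def field_simps eval_nat_numeral)
    have v: "(y + G (y * \<beta> y) - G (y * \<alpha> y))/2 = y * \<gamma> y"
      unfolding Gz[OF yb] Gz[OF ya]
      by (rule alg2[of _ y "\<kappa> y"], simp_all only: \<alpha>_def \<beta>_def \<delta>_def \<gamma>_def)
    have e: "G y / 2 + (G (y * \<alpha> y) + G (y * \<beta> y))/2 + G (y * \<gamma> y) = G y"
      using eq[of y] unfolding u1 u2 v .
    have e2: "(c*y^2 + y^4*hh y)/2 + ((c*(y*\<alpha> y)^2 + (y*\<alpha> y)^4*hh (y * \<alpha> y)) + (c*(y*\<beta> y)^2 + (y*\<beta> y)^4*hh (y * \<beta> y)))/2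
     + (c*(y*\<gamma> y)^2 + (y*\<gamma> y)^4*hh (y * \<gamma> y)) = c*y^2 + y^4*hh y"
      using e unfolding Gz[OF yb] Gz[OF ya] Gz[OF yg] Gz[OF y0] .
    have A: "(c*y^2 + y^4*hh y)/2 + ((c*(y*\<alpha> y)^2 + (y*\<alpha> y)^4*hh (y * \<alpha> y)) + (c*(y*\<beta> y)^2 + (y*\<beta> y)^4*hh (y * \<beta> y)))/2
     + (c*(y*\<gamma> y)^2 + (y*\<gamma> y)^4*hh (y * \<gamma> y)) - (c*y^2 + y^4*hh y) = y^4 * Q y"
      unfolding Q_def by (rule alg1) (simp_all add: \<alpha>_def \<beta>_def \<gamma>_def)
    have "y^4 * Q y = 0" using A e2 by linarith
    then show ?thesis using y0 by simp
  qed
  have hl: "(hh \<longlongrightarrow> d) (at 0)" using lim unfolding hh_def .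
  have kl: "(\<kappa> \<longlongrightarrow> c) (at 0)"
  proof -
    have "((\<lambda>y. c + y^2 * hh y) \<longlongrightarrow> c + 0^2 * d) (at 0)"
      by (intro tendsto_intros hl)
    then show ?thesis by (simp add: \<kappa>_def)
  qed
  have al: "(\<alpha> \<longlongrightarrow> 1/2) (at 0)"
  proof -
    have "((\<lambda>y. (1 + y * \<kappa> y)/2) \<longlongrightarrow> (1 + 0 * c)/2) (at 0)"
      by (intro tendsto_intros kl) auto
    then show ?thesis by (simp add: \<alpha>_def)
  qed
  have bl: "(\<beta> \<longlongrightarrow> 1/2) (at 0)"
  proof -
    have "((\<lambda>y. (1 - y * \<kappa> y)/2) \<longlongrightarrow> (1 - 0 * c)/2) (at 0)"
      by (intro tendsto_intros kl) auto
    then show ?thesis by (simp add: \<beta>_def)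
  qed
  have ne: "\<forall>\<^sub>F y in at (0::real). y \<noteq> 0" by (simp add: eventually_at_filter)
  have fl: "filterlim (\<lambda>y. y * f y) (at 0) (at 0)" if "(f \<longlongrightarrow> 1/2) (at 0)" for f :: "real \<Rightarrow> real"
  proof (rule filterlim_atI)
    have "((\<lambda>y. y * f y) \<longlongrightarrow> 0 * (1/2)) (at 0)" by (intro tendsto_intros that)
    then show "((\<lambda>y. y * f y) \<longlongrightarrow> 0) (at 0)" by simp
    have "\<forall>\<^sub>F y in at 0. f y > 0" using order_tendstoD(1)[OF that, of 0] by simp
    then show "\<forall>\<^sub>F y in at 0. y * f y \<noteq> 0" using ne by eventually_elim simp
  qed
  have ha: "((\<lambda>y. hh (y * \<alpha> y)) \<longlongrightarrow> d) (at 0)" by (rule filterlim_compose[OF hl fl[OF al]])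
  have hb: "((\<lambda>y. hh (y * \<beta> y)) \<longlongrightarrow> d) (at 0)" by (rule filterlim_compose[OF hl fl[OF bl]])
  have dl: "(\<delta> \<longlongrightarrow> - c * c + 0 * ((1/2)^4 * d - (1/2)^4 * d)) (at 0)"
    unfolding \<delta>_def by (intro tendsto_intros kl al bl ha hb)
  have gl: "(\<gamma> \<longlongrightarrow> 1/2) (at 0)"
  proof -
    have "((\<lambda>y. (1 + y^2 * \<delta> y)/2) \<longlongrightarrow> (1 + 0^2 * (- c * c + 0 * ((1/2)^4 * d - (1/2)^4 * d)))/2) (at 0)"
      by (intro tendsto_intros dl) auto
    then show ?thesis by (simp add: \<gamma>_def)
  qed
  have hg: "((\<lambda>y. hh (y * \<gamma> y)) \<longlongrightarrow> d) (at 0)" by (rule filterlim_compose[OF hl fl[OF gl]])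
  have Ql: "(Q \<longlongrightarrow> c*(c^2 + 2*(- c * c + 0 * ((1/2)^4 * d - (1/2)^4 * d)) + 0^2*(- c * c + 0 * ((1/2)^4 * d - (1/2)^4 * d))^2)/4 - d/2
      + ((1/2)^4 * d + (1/2)^4 * d)/2 + (1/2)^4 * d) (at 0)"
    unfolding Q_def by (intro tendsto_intros kl dl al bl gl hl ha hb hg) auto
  have Q0: "\<forall>\<^sub>F y in at 0. Q y = 0"
  proof -
    have "\<forall>\<^sub>F y in at 0. \<alpha> y > 0" using order_tendstoD(1)[OF al, of 0] by simp
    moreover have "\<forall>\<^sub>F y in at 0. \<beta> y > 0" using order_tendstoD(1)[OF bl, of 0] by simp
    moreover have "\<forall>\<^sub>F y in at 0. \<gamma> y > 0" using order_tendstoD(1)[OF gl, of 0] by simp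
    ultimately show ?thesis using ne by eventually_elim (rule key, auto)
  qed
  have "(Q \<longlongrightarrow> 0) (at 0)" using Q0 by (simp add: tendsto_eventually)
  from tendsto_unique[OF _ Ql this] have "c*(c^2 + 2*(- c * c + 0 * ((1/2)^4 * d - (1/2)^4 * d)) + 0^2*(- c * c + 0 * ((1/2)^4 * d - (1/2)^4 * d))^2)/4 - d/2
      + ((1/2)^4 * d + (1/2)^4 * d)/2 + (1/2)^4 * d = (0::real)" by simp
  then show ?thesis by (simp add: field_simps power2_eq_square power3_eq_cube)
qed

definition XX :: "real \<Rightarrow> real" where
  "XX z = (if z = 0 then 1 else (exp z - exp (- z)) / (2 * z))"
definition SS :: "real \<Rightarrow> real" where "SS z = ln (XX z)"
definition TT :: "real \<Rightarrow> real" where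
  "TT z = (if z = 0 then 0 else z * (exp z + exp (- z)) / (exp z - exp (- z)) - 1)"
definition GG :: "real \<Rightarrow> real \<Rightarrow> real \<Rightarrow> real" where
  "GG p r y = (if p = r then (if r = 0 then 0 else TT (r * y) / r) else (SS (p * y) - SS (r * y)) / (p - r))"

lemma exp_powr_real: "exp (x::real) powr s = exp (s * x)"
  by (simp add: powr_def)

lemma XX_pos: "XX z > 0"
proof (cases "z = 0")
  case False
  show ?thesis
  proof (cases "z > 0")
    case True
    then have "exp (- z) < exp z" by simp
    then show ?thesis using True by (simp add: XX_def)
  next
    case f2: False
    with False have "z < 0" by simp
    then have "exp z < exp (- z)" by simp
    then show ?thesis using \<open>z < 0\<close> by (simp add: XX_def divide_neg_neg)
  qed
qed (simp add: XX_def)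

lemma D_lemma:
  assumes k: "k \<noteq> 0"
  shows "(exp (k*b) - exp (k*a)) / k = exp (k*((a+b)/2)) * (b - a) * XX (k*((b-a)/2))"
proof (cases "a = b")
  case True then show ?thesis by simp
next
  case False
  define y where "y = (b - a)/2"
  define m where "m = (a + b)/2"
  have ky: "k*y \<noteq> 0" using k False by (simp add: y_def)
  have eb: "exp (k*b) = exp (k*m) * exp (k*y)"
    by (simp add: exp_add[symmetric] m_def y_def field_simps)
  have ea: "exp (k*a) = exp (k*m) * exp (- (k*y))"
    by (simp add: exp_add[symmetric] m_def y_def field_simps)
  have ba: "b - a = 2*y" by (simp add: y_def)
  show ?thesis unfolding eb ea ba m_def[symmetric] y_def[symmetric] using ky k
    by (simp add: XX_def field_simps)
qed

lemma GG0: "GG p r 0 = 0"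
  by (simp add: GG_def SS_def XX_def TT_def)

lemma rep: "stolarsky p r (exp a) (exp b) = exp ((a+b)/2 + GG p r ((b-a)/2))"
proof (cases "a = b")
  case True then show ?thesis by (simp add: stolarsky_def GG0)
next
  case False
  define y where "y = (b - a)/2"
  define m where "m = (a + b)/2"
  have y0: "y \<noteq> 0" using False by (simp add: y_def)
  have ne: "exp a \<noteq> exp b" using False by simp
  have ba: "b - a = 2*y" by (simp add: y_def)
  show ?thesis
  proof (cases "p = r")
    case pr: True
    show ?thesis
    proof (cases "r = 0")
      case True
      have "exp a * exp b = (exp m)^2"
        by (simp add: exp_add[symmetric] m_def power2_eq_square)
      then show ?thesis using pr True ne by (simp add: stolarsky_def GG_def m_def)
    next
      case r0: False
      have ry: "r*y \<noteq> 0" using r0 y0 by simp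
      have eb: "exp (r*b) = exp (r*m) * exp (r*y)"
        by (simp add: exp_add[symmetric] m_def y_def field_simps)
      have ea: "exp (r*a) = exp (r*m) * exp (- (r*y))"
        by (simp add: exp_add[symmetric] m_def y_def field_simps)
      have dne: "exp (r*y) - exp (- (r*y)) \<noteq> 0"
      proof
        assume "exp (r*y) - exp (- (r*y)) = 0"
        then have "r*y = - (r*y)" by simp
        then show False using ry by simp
      qed
      have bb: "b = m + y" "a = m - y" by (simp_all add: m_def y_def field_simps)
      have "stolarsky p r (exp a) (exp b) =
          exp (- 1 / r) * exp ((exp (r*b) * b - exp (r*a) * a) / (exp (r*b) - exp (r*a)))"
        using pr ne r0 by (simp add: stolarsky_def exp_powr_real exp_diff[symmetric] mult.commute)
      also have "\<dots> = exp (- 1 / r + (exp (r*b) * b - exp (r*a) * a) / (exp (r*b) - exp (r*a)))"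
        by (rule mult_exp_exp)
      also have "- 1 / r + (exp (r*b) * b - exp (r*a) * a) / (exp (r*b) - exp (r*a)) = m + TT (r*y) / r"
      proof -
        have "(exp (r*b) * b - exp (r*a) * a) / (exp (r*b) - exp (r*a))
            = (exp (r*y) * (m + y) - exp (- (r*y)) * (m - y)) / (exp (r*y) - exp (- (r*y)))"
          unfolding eb ea by (simp add: bb[symmetric] right_diff_distrib[symmetric] mult.assoc)
        also have "\<dots> = m + y * (exp (r*y) + exp (- (r*y))) / (exp (r*y) - exp (- (r*y)))"
          using dne by (simp add: field_simps)
        finally have F: "(exp (r*b) * b - exp (r*a) * a) / (exp (r*b) - exp (r*a))
           = m + y * (exp (r*y) + exp (- (r*y))) / (exp (r*y) - exp (- (r*y)))" .
        have "TT (r*y) / r = y * (exp (r*y) + exp (- (r*y))) / (exp (r*y) - exp (- (r*y))) - 1/r"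
          using ry r0 dne by (simp add: TT_def field_simps)
        then show ?thesis unfolding F by simp
      qed
      finally show ?thesis using pr r0 by (simp add: GG_def m_def y_def)
    qed
  next
    case pr: False
    show ?thesis
    proof (cases "p = 0")
      case p0: True
      then have r0: "r \<noteq> 0" using pr by simp
      have "(exp (r*b) - exp (r*a)) / (r * (b - a)) = exp (r*m) * XX (r*y)"
        using D_lemma[OF r0, of b a] r0 y0 by (simp add: m_def y_def field_simps)
      moreover have "exp (r*m) * XX (r*y) > 0" using XX_pos by simp
      ultimately have "stolarsky p r (exp a) (exp b) = exp ((1/r) * (r*m + SS (r*y)))"
        using p0 r0 ne XX_pos less_imp_neq[OF XX_pos] by (simp add: stolarsky_def exp_powr_real powr_def ln_mult SS_def)
      also have "(1/r) * (r*m + SS (r*y)) = m + GG p r y"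
        using p0 r0 by (simp add: GG_def SS_def XX_def field_simps)
      finally show ?thesis by (simp add: m_def y_def)
    next
      case p0: False
      show ?thesis
      proof (cases "r = 0")
        case r0: True
        have "(exp (p*b) - exp (p*a)) / (p * (b - a)) = exp (p*m) * XX (p*y)"
          using D_lemma[OF p0, of b a] p0 y0 by (simp add: m_def y_def field_simps)
        moreover have "exp (p*m) * XX (p*y) > 0" using XX_pos by simp
        ultimately have "stolarsky p r (exp a) (exp b) = exp ((1/p) * (p*m + SS (p*y)))"
          using p0 r0 ne XX_pos less_imp_neq[OF XX_pos] by (simp add: stolarsky_def exp_powr_real powr_def ln_mult SS_def)
        also have "(1/p) * (p*m + SS (p*y)) = m + GG p r y"
          using p0 r0 by (simp add: GG_def SS_def XX_def field_simps)
        finally show ?thesis by (simp add: m_def y_def)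
      next
        case r0: False
        have Dp: "(exp (p*b) - exp (p*a)) / p = exp (p*m) * (b - a) * XX (p*y)"
          using D_lemma[OF p0, of b a] by (simp add: m_def y_def)
        have Dr: "(exp (r*b) - exp (r*a)) / r = exp (r*m) * (b - a) * XX (r*y)"
          using D_lemma[OF r0, of b a] by (simp add: m_def y_def)
        have bane: "b - a \<noteq> 0" using False by simp
        have R: "(r * (exp (p*b) - exp (p*a))) / (p * (exp (r*b) - exp (r*a)))
            = (exp (p*m) * XX (p*y)) / (exp (r*m) * XX (r*y))"
        proof -
          have "(r * (exp (p*b) - exp (p*a))) / (p * (exp (r*b) - exp (r*a)))
              = ((exp (p*b) - exp (p*a)) / p) / ((exp (r*b) - exp (r*a)) / r)"
            using p0 r0 by (simp add: field_simps)
          also have "\<dots> = (exp (p*m) * XX (p*y)) / (exp (r*m) * XX (r*y))"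
            unfolding Dp Dr using bane by simp
          finally show ?thesis .
        qed
        have pos: "(exp (p*m) * XX (p*y)) / (exp (r*m) * XX (r*y)) > 0" using XX_pos by simp
        have "stolarsky p r (exp a) (exp b)
            = ((r * (exp (p*b) - exp (p*a))) / (p * (exp (r*b) - exp (r*a)))) powr (1 / (p - r))"
          using p0 r0 pr ne by (simp add: stolarsky_def exp_powr_real)
        also have "\<dots> = ((exp (p*m) * XX (p*y)) / (exp (r*m) * XX (r*y))) powr (1 / (p - r))"
          unfolding R ..
        also have "\<dots> = exp ((1/(p-r)) * (p*m + SS (p*y) - (r*m + SS (r*y))))"
          using pos XX_pos less_imp_neq[OF XX_pos] by (simp add: powr_def ln_div ln_mult SS_def)
        also have "(1/(p-r)) * (p*m + SS (p*y) - (r*m + SS (r*y))) = m + GG p r y"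
          using pr by (simp add: GG_def field_simps)
        finally show ?thesis by (simp add: m_def y_def)
      qed
    qed
  qed
qed

lemma SS_lim: "((\<lambda>z. (SS z - z^2/6)/z^4) \<longlongrightarrow> -1/180) (at 0)"
proof -
  have "((\<lambda>z::real. (ln((exp z - exp(-z))/(2*z)) - z^2/6)/z^4) \<longlongrightarrow> -1/180) (at 0)"
    by real_asymp
  moreover have "\<forall>\<^sub>F z in at (0::real). (ln((exp z - exp(-z))/(2*z)) - z^2/6)/z^4 = (SS z - z^2/6)/z^4"
    by (simp add: eventually_at_filter SS_def XX_def)
  ultimately show ?thesis by (rule Lim_transform_eventually)
qed

lemma TT_lim: "((\<lambda>z. (TT z - z^2/3)/z^4) \<longlongrightarrow> -1/45) (at 0)"
proof -
  have "((\<lambda>z::real. (z*(exp z + exp(-z))/(exp z - exp(-z)) - 1 - z^2/3)/z^4) \<longlongrightarrow> -1/45) (at 0)"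
    by real_asymp
  moreover have "\<forall>\<^sub>F z in at (0::real). (z*(exp z + exp(-z))/(exp z - exp(-z)) - 1 - z^2/3)/z^4 = (TT z - z^2/3)/z^4"
    by (simp add: eventually_at_filter TT_def)
  ultimately show ?thesis by (rule Lim_transform_eventually)
qed

lemma scale_at0: "k \<noteq> 0 \<Longrightarrow> filterlim (\<lambda>y::real. k*y) (at 0) (at 0)"
proof (rule filterlim_atI)
  show "((\<lambda>y::real. k*y) \<longlongrightarrow> 0) (at 0)" by (intro tendsto_eq_intros) auto
  assume "k \<noteq> 0"
  then show "\<forall>\<^sub>F y in at 0. k*y \<noteq> 0" by (simp add: eventually_at_filter)
qed

lemma SSk_lim: "((\<lambda>y. (SS (k*y) - k^2*y^2/6)/y^4) \<longlongrightarrow> (- (k^4)/180)) (at 0)"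
proof (cases "k = 0")
  case True then show ?thesis by (simp add: SS_def XX_def)
next
  case False
  have "((\<lambda>y. (SS (k*y) - (k*y)^2/6)/(k*y)^4) \<longlongrightarrow> -1/180) (at 0)"
    using filterlim_compose[OF SS_lim scale_at0[OF False]] .
  then have "((\<lambda>y. k^4 * ((SS (k*y) - (k*y)^2/6)/(k*y)^4)) \<longlongrightarrow> k^4 * (-1/180)) (at 0)"
    by (rule tendsto_mult[OF tendsto_const])
  moreover have "\<forall>\<^sub>F y in at 0. k^4 * ((SS (k*y) - (k*y)^2/6)/(k*y)^4) = (SS (k*y) - k^2*y^2/6)/y^4"
    using False by (simp add: eventually_at_filter power_mult_distrib field_simps)
  ultimately show ?thesis by (auto intro: Lim_transform_eventually)
qed

lemma GG_lim: "((\<lambda>y. (GG p r y - (p+r)/6*y^2)/y^4) \<longlongrightarrow> (-(p+r)*(p^2+r^2)/180)) (at 0)"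
proof (cases "p = r")
  case pr: True
  show ?thesis
  proof (cases "r = 0")
    case True then show ?thesis using pr by (simp add: GG_def)
  next
    case False
    have "((\<lambda>y. (TT (r*y) - (r*y)^2/3)/(r*y)^4) \<longlongrightarrow> -1/45) (at 0)"
      using filterlim_compose[OF TT_lim scale_at0[OF False]] .
    then have A: "((\<lambda>y. r^3 * ((TT (r*y) - (r*y)^2/3)/(r*y)^4)) \<longlongrightarrow> r^3 * (-1/45)) (at 0)"
      by (rule tendsto_mult[OF tendsto_const])
    have B: "\<forall>\<^sub>F y in at 0. r^3 * ((TT (r*y) - (r*y)^2/3)/(r*y)^4) = (GG p r y - (p+r)/6*y^2)/y^4"
      using False pr by (simp add: eventually_at_filter GG_def power_mult_distrib field_simps eval_nat_numeral)
    have C: "r^3 * (-1/45) = -(p+r)*(p^2+r^2)/180"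
      using pr by (simp add: field_simps eval_nat_numeral)
    show ?thesis using Lim_transform_eventually[OF A B] unfolding C .
  qed
next
  case False
  have "((\<lambda>y. ((SS (p*y) - p^2*y^2/6)/y^4 - (SS (r*y) - r^2*y^2/6)/y^4) / (p - r)) \<longlongrightarrow> ((- (p^4))/180 - (- (r^4))/180)/(p-r)) (at 0)"
    using False by (intro tendsto_intros SSk_lim) auto
  note A = this
  have B: "\<forall>\<^sub>F y in at 0. ((SS (p*y) - p^2*y^2/6)/y^4 - (SS (r*y) - r^2*y^2/6)/y^4) / (p - r) = (GG p r y - (p+r)/6*y^2)/y^4"
  proof -
    have "((SS (p*y) - p^2*y^2/6)/y^4 - (SS (r*y) - r^2*y^2/6)/y^4) / (p - r) = (GG p r y - (p+r)/6*y^2)/y^4" if "y \<noteq> 0" for y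
    proof -
      have pr0: "p - r \<noteq> 0" using False by simp
      show ?thesis using pr0 that unfolding GG_def using False
        by (simp add: field_simps power2_eq_square)
    qed
    then show ?thesis by (simp add: eventually_at_filter)
  qed
  have C: "((- (p^4))/180 - (- (r^4))/180)/(p-r) = -(p+r)*(p^2+r^2)/180"
  proof -
    have "- (p^4) + r^4 = -(p+r)*(p^2+r^2)*(p-r)" by algebra
    then show ?thesis using False by (simp add: field_simps)
  qed
  show ?thesis using Lim_transform_eventually[OF A B] unfolding C .
qed

lemma stable_imp:
  assumes st: "stable_mean (stolarsky p r)"
  shows "(p - 2 * r) * (r - 2 * p) * (p + r) = 0"
proof -
  let ?M = "stolarsky p r" and ?G = "GG p r"
  have eq: "?G y / 2 + (?G ((y + ?G y)/2) + ?G ((y - ?G y)/2))/2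
      + ?G ((y + ?G ((y - ?G y)/2) - ?G ((y + ?G y)/2))/2) = ?G y" for y
  proof -
    define g where "g = ?G y"
    define A where "A = (g - y)/2 + ?G ((y + g)/2)"
    define B where "B = (g + y)/2 + ?G ((y - g)/2)"
    have m: "?M (exp (-y)) (exp y) = exp g"
      using rep[of p r "-y" y] by (simp add: g_def)
    have a: "?M (exp (-y)) (exp g) = exp A"
    proof -
      have "(- y + g)/2 = (g - y)/2" "(g - - y)/2 = (y + g)/2" by simp_all
      then show ?thesis using rep[of p r "-y" g] by (simp add: A_def add.commute)
    qed
    have b: "?M (exp g) (exp y) = exp B"
    proof -
      have "(g + y)/2 = (g + y)/2" "(y - g)/2 = (y - g)/2" by simp_all
      then show ?thesis using rep[of p r g y] by (simp add: B_def)
    qed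
    have c: "?M (exp A) (exp B) = exp ((A + B)/2 + ?G ((B - A)/2))" by (rule rep)
    have "?M (exp (-y)) (exp y) = ?M (?M (exp (-y)) (?M (exp (-y)) (exp y))) (?M (?M (exp (-y)) (exp y)) (exp y))"
      using st unfolding stable_mean_def by auto
    then have "exp g = exp ((A + B)/2 + ?G ((B - A)/2))" unfolding m a b c .
    then have "g = (A + B)/2 + ?G ((B - A)/2)" by simp
    moreover have "(A + B)/2 = g/2 + (?G ((y + g)/2) + ?G ((y - g)/2))/2" by (simp add: A_def B_def field_simps)
    moreover have "?G ((B - A)/2) = ?G ((y + ?G ((y - g)/2) - ?G ((y + g)/2))/2)"
    proof -
      have "(B - A)/2 = (y + ?G ((y - g)/2) - ?G ((y + g)/2))/2" by (simp add: A_def B_def field_simps)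
      then show ?thesis by (rule arg_cong)
    qed
    ultimately show ?thesis unfolding g_def by linarith
  qed
  have "3 * (-(p+r)*(p^2+r^2)/180) + 2 * ((p+r)/6)^3 = 0"
    by (rule stab_abstract[OF eq GG_lim])
  moreover have "(p - 2 * r) * (r - 2 * p) * (p + r) = 270 * (3 * (-(p+r)*(p^2+r^2)/180) + 2 * ((p+r)/6)^3)"
    by (simp add: field_simps power2_eq_square power3_eq_cube)
  ultimately show ?thesis by simp
qed

lemma pm_pos: "s > 0 \<Longrightarrow> t > 0 \<Longrightarrow> power_mean r s t > 0"
  using add_pos_pos[of "s powr r" "t powr r"] by (simp add: power_mean_def)

lemma pm_pow: assumes "s > 0" "t > 0" "r \<noteq> 0"
  shows "power_mean r s t powr r = (s powr r + t powr r)/2"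
proof -
  have "(s powr r + t powr r)/2 > 0" using assms add_pos_pos[of "s powr r" "t powr r"] by simp
  then show ?thesis using assms by (simp add: power_mean_def powr_powr)
qed

lemma pm_stable: "stable_mean (power_mean r)"
  unfolding stable_mean_def
proof (intro allI impI)
  fix s t :: real assume s: "s > 0" and t: "t > 0"
  show "power_mean r s t = power_mean r (power_mean r s (power_mean r s t)) (power_mean r (power_mean r s t) t)"
  proof (cases "r = 0")
    case True
    have "sqrt (sqrt (s * sqrt (s * t)) * sqrt (sqrt (s * t) * t)) = sqrt (s*t)"
    proof -
      have "sqrt (s * sqrt (s * t)) * sqrt (sqrt (s * t) * t) = sqrt (s * t * (sqrt (s*t) * sqrt (s*t)))"
        by (simp add: real_sqrt_mult[symmetric] mult_ac)
      also have "\<dots> = s * t" using s t by simp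
      finally show ?thesis by simp
    qed
    then show ?thesis using True by (simp add: power_mean_def)
  next
    case False
    define m where "m = power_mean r s t"
    have m0: "m > 0" using s t by (simp add: m_def pm_pos)
    have a0: "power_mean r s m > 0" "power_mean r m t > 0" using s t m0 by (simp_all add: pm_pos)
    have "power_mean r (power_mean r s m) (power_mean r m t)
        = ((power_mean r s m powr r + power_mean r m t powr r)/2) powr (1/r)"
      using False by (simp add: power_mean_def)
    also have "(power_mean r s m powr r + power_mean r m t powr r)/2 = (s powr r + t powr r)/2"
      using pm_pow[OF s m0 False] pm_pow[OF m0 t False] pm_pow[OF s t False] by (simp add: m_def field_simps)
    finally show ?thesis using False by (simp add: m_def power_mean_def)
  qed
qed

lemma stable_transfer:
  assumes eq: "\<And>s t. s > 0 \<Longrightarrow> t > 0 \<Longrightarrow> M s t = N s t"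
    and pos: "\<And>s t. s > 0 \<Longrightarrow> t > 0 \<Longrightarrow> N s t > 0"
  shows "stable_mean M = stable_mean N"
proof -
  have "M s t = M (M s (M s t)) (M (M s t) t) \<longleftrightarrow> N s t = N (N s (N s t)) (N (N s t) t)"
    if "s > 0" "t > 0" for s t
    using that by (simp add: eq pos)
  then show ?thesis unfolding stable_mean_def by blast
qed

lemma powr_inj_base: fixes s t r :: real assumes "s > 0" "t > 0" "r \<noteq> 0" "s powr r = t powr r" shows "s = t"
proof -
  have "s = (s powr r) powr (1/r)" using assms(1,3) by (simp add: powr_powr)
  also have "\<dots> = (t powr r) powr (1/r)" using assms by simp
  also have "\<dots> = t" using assms(2,3) by (simp add: powr_powr)
  finally show ?thesis .
qed

lemma id1: assumes s: "s > 0" and t: "t > 0" shows "stolarsky (2 * r) r s t = power_mean r s t"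
proof (cases "s = t")
  case steq: True
  show ?thesis
  proof (cases "r = 0")
    case False
    then show ?thesis unfolding steq using t by (simp add: stolarsky_def power_mean_def powr_powr)
  next
    case True
    then show ?thesis unfolding steq using t abs_of_pos[OF t] by (simp add: stolarsky_def power_mean_def)
  qed
next
  case st: False
  show ?thesis
  proof (cases "r = 0")
    case True then show ?thesis using st by (simp add: stolarsky_def power_mean_def)
  next
    case False
    define x where "x = t powr r"
    define y where "y = s powr r"
    have xy: "x - y \<noteq> 0" using powr_inj_base[OF t s False] st by (auto simp: x_def y_def)
    have x2: "t powr (2*r) = x*x" "s powr (2*r) = y*y"
      by (simp_all add: x_def y_def powr_add[symmetric])
    have "stolarsky (2 * r) r s t = ((r * (x*x - y*y)) / (2*r * (x - y))) powr (1 / (2*r - r))"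
      using st False by (simp add: stolarsky_def x2 x_def[symmetric] y_def[symmetric])
    also have "(r * (x*x - y*y)) / (2*r * (x - y)) = (y + x)/2"
      using xy False by (simp add: field_simps)
    finally show ?thesis using False by (simp add: power_mean_def x_def y_def)
  qed
qed

lemma id2: assumes s: "s > 0" and t: "t > 0" shows "stolarsky p (2 * p) s t = power_mean p s t"
proof (cases "s = t")
  case steq: True
  show ?thesis
  proof (cases "p = 0")
    case False
    then show ?thesis unfolding steq using t by (simp add: stolarsky_def power_mean_def powr_powr)
  next
    case True
    then show ?thesis unfolding steq using t abs_of_pos[OF t] by (simp add: stolarsky_def power_mean_def)
  qed
next
  case st: False
  show ?thesis
  proof (cases "p = 0")
    case True then show ?thesis using st by (simp add: stolarsky_def power_mean_def)
  next
    case False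
    define x where "x = t powr p"
    define y where "y = s powr p"
    have xp: "x > 0" "y > 0" using s t by (simp_all add: x_def y_def)
    have xy: "x - y \<noteq> 0" using powr_inj_base[OF t s False] st by (auto simp: x_def y_def)
    have x2: "t powr (2*p) = x*x" "s powr (2*p) = y*y"
      by (simp_all add: x_def y_def powr_add[symmetric])
    have "stolarsky p (2 * p) s t = ((2*p * (x - y)) / (p * (x*x - y*y))) powr (1 / (p - 2*p))"
      using st False by (simp add: stolarsky_def x2 x_def[symmetric] y_def[symmetric])
    also have "(2*p * (x - y)) / (p * (x*x - y*y)) = 2 / (x + y)"
    proof -
      have e: "x*x - y*y = (x - y)*(x + y)" by (simp add: algebra_simps)
      have "x + y \<noteq> 0" using xp by simp
      then show ?thesis unfolding e using xy False by (simp add: divide_simps mult_ac)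
    qed
    also have "(2 / (x + y)) powr (1 / (p - 2*p)) = ((y + x)/2) powr (1/p)"
    proof -
      have "1 / (p - 2*p) = - (1/p)" using False by (simp add: field_simps)
      moreover have "ln (2 / (x + y)) = - ln ((y + x)/2)" using xp by (simp add: ln_div add.commute)
      ultimately show ?thesis using xp by (simp add: powr_def)
    qed
    finally show ?thesis using False by (simp add: power_mean_def x_def y_def)
  qed
qed

lemma id3: assumes s: "s > 0" and t: "t > 0" shows "stolarsky p (- p) s t = power_mean 0 s t"
proof (cases "s = t")
  case steq: True
  show ?thesis unfolding steq using t abs_of_pos[OF t] by (simp add: stolarsky_def power_mean_def)
next
  case st: False
  show ?thesis
  proof (cases "p = 0")
    case True then show ?thesis using st by (simp add: stolarsky_def power_mean_def)
  next
    case False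
    define x where "x = t powr p"
    define y where "y = s powr p"
    have xp: "x > 0" "y > 0" using s t by (simp_all add: x_def y_def)
    have xy: "x - y \<noteq> 0" using powr_inj_base[OF t s False] st by (auto simp: x_def y_def)
    have x2: "t powr (- p) = inverse x" "s powr (- p) = inverse y"
      by (simp_all add: x_def y_def powr_minus)
    have "stolarsky p (- p) s t = ((- p * (x - y)) / (p * (inverse x - inverse y))) powr (1 / (p - - p))"
      using st False by (simp add: stolarsky_def x2 x_def[symmetric] y_def[symmetric])
    also have "(- p * (x - y)) / (p * (inverse x - inverse y)) = (t * s) powr p"
    proof -
      have "(- p * (x - y)) / (p * (inverse x - inverse y)) = x * y"
        using xy False xp by (simp add: field_simps)
      then show ?thesis using s t by (simp add: x_def y_def powr_mult)
    qed
    also have "((t * s) powr p) powr (1 / (p - - p)) = (t * s) powr (1/2)"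
      using False by (simp add: powr_powr)
    also have "\<dots> = sqrt (s * t)" using s t by (simp add: powr_half_sqrt mult.commute)
    finally show ?thesis by (simp add: power_mean_def)
  qed
qed

theorem mainTheorem14:
  shows "(\<forall>p r :: real. stable_mean (stolarsky p r) \<longleftrightarrow> (p - 2 * r) * (r - 2 * p) * (p + r) = 0)
    \<and> (\<forall>r s t :: real. s > 0 \<longrightarrow> t > 0 \<longrightarrow> stolarsky (2 * r) r s t = power_mean r s t)
    \<and> (\<forall>p s t :: real. s > 0 \<longrightarrow> t > 0 \<longrightarrow> stolarsky p (2 * p) s t = power_mean p s t)
    \<and> (\<forall>p s t :: real. s > 0 \<longrightarrow> t > 0 \<longrightarrow> stolarsky p (- p) s t = power_mean 0 s t)"
proof (intro conjI allI impI)
  fix p r :: real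
  show "stable_mean (stolarsky p r) \<longleftrightarrow> (p - 2 * r) * (r - 2 * p) * (p + r) = 0"
  proof
    assume "stable_mean (stolarsky p r)"
    then show "(p - 2 * r) * (r - 2 * p) * (p + r) = 0" by (rule stable_imp)
  next
    assume "(p - 2 * r) * (r - 2 * p) * (p + r) = 0"
    then have "p = 2 * r \<or> r = 2 * p \<or> r = - p" by auto
    then show "stable_mean (stolarsky p r)"
    proof (elim disjE)
      assume "p = 2 * r"
      then have "stable_mean (stolarsky p r) = stable_mean (power_mean r)"
        by (intro stable_transfer) (simp_all add: id1 pm_pos)
      then show ?thesis using pm_stable by simp
    next
      assume "r = 2 * p"
      then have "stable_mean (stolarsky p r) = stable_mean (power_mean p)"
        by (intro stable_transfer) (simp_all add: id2 pm_pos)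
      then show ?thesis using pm_stable by simp
    next
      assume "r = - p"
      then have "stable_mean (stolarsky p r) = stable_mean (power_mean 0)"
        by (intro stable_transfer) (simp_all add: id3 pm_pos)
      then show ?thesis using pm_stable by simp
    qed
  qed
qed (simp_all add: id1 id2 id3)

end
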